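(* Let $0<p<1/2$, let $m$ be a bounded generating sequence, and let $\varphi:\mathbb{N}\to[1,\infty)$ be a nondecreasing function such that $$\limsup_{n\to\infty}\frac{(n+1)^{1/p-2}}{\varphi(n)}=+\infty.$$ Then $$\sup_{f\in H_p(G_m),\ \|f\|_{H_p}\le 1}\ \sup_{n\in\mathbb{N}_+}\Big\|\frac{\sigma_nf}{\varphi(n)}\Big\|_{L_{p,\infty}(G_m)}=\infty .$$ In particular the maximal operator $f\mapsto\sup_{n}|\sigma_nf|/\varphi(n)$ is not bounded from $H_p(G_m)$ to $L_{p,\infty}(G_m)$.
   Context: Let $m=(m_0,m_1,\dots)$ be a sequence of integers $m_k\ge 2$ with $\sup_k m_k<\infty$ (bounded Vilenkin group). $Z_{m_k}=\{0,1,\dots,m_k-1\}$ is the additive group of integers mod $m_k$, and $G_m=\prod_k Z_{m_k}$ is the complete direct product, with elements $x=(x_0,x_1,\dots)$, $x_k\in Z_{m_k}$, product topology, and Haar measure $\mu$ = product of the uniform measures $\mu_k(\{j\})=1/m_k$. Set $M_0=1$, $M_{k+1}=m_kM_k$; every $n\in\mathbb{N}$ is uniquely $n=\sum_j n_jM_j$ with $n_j\in Z_{m_j}$. For $n\ge1$, $I_n(x)=\{y\in G_m: y_j=x_j,\ j<n\}$, $I_0(x)=G_m$. The generalized Rademacher functions are $r_k(x)=\exp(2\pi i x_k/m_k)$ and the Vilenkin system is $\psi_n=\prod_k r_k^{n_k}$. $\digamma_n$ is the $\sigma$-algebra generated by the intervals $I_n(x)$. A martingale $f=(f^{(n)})$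 is with respect to $(\digamma_n)$; $f^*=\sup_n|f^{(n)}|$, and $H_p(G_m)$ consists of martingales with $\|f\|_{H_p}:=\|f^*\|_{L_p}<\infty$. Fourier coefficients of a martingale are $\widehat f(i)=\lim_{k\to\infty}\int_{G_m}f^{(k)}\overline{\psi_i}\,d\mu$; $S_nf=\sum_{k=0}^{n-1}\widehat f(k)\psi_k$ ($S_0f=0$), $\sigma_nf=\frac1n\sum_{k=0}^{n-1}S_kf$. The weak space $L_{p,\infty}(G_m)$ has quasinorm $\|g\|_{L_{p,\infty}}=\big(\sup_{\lambda>0}\lambda^p\mu(|g|>\lambda)\big)^{1/p}$. *)

theory Defs
  imports "HOL-Probability.Probability"
begin

definition Gm :: "(nat \<Rightarrow> nat) \<Rightarrow> (nat \<Rightarrow> nat) measure" where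
  "Gm m = (\<Pi>\<^sub>M k\<in>UNIV. uniform_count_measure {..<m k})"

definition bounded_generating :: "(nat \<Rightarrow> nat) \<Rightarrow> bool" where
  "bounded_generating m \<longleftrightarrow> (\<forall>k. 2 \<le> m k) \<and> bdd_above (range m)"

definition Mk :: "(nat \<Rightarrow> nat) \<Rightarrow> nat \<Rightarrow> nat" where
  "Mk m k = (\<Prod>i<k. m i)"

(* the digit n_j in n = sum_j n_j M_j *)
definition digit :: "(nat \<Rightarrow> nat) \<Rightarrow> nat \<Rightarrow> nat \<Rightarrow> nat" where
  "digit m n j = (n div Mk m j) mod m j"

definition rademacher :: "(nat \<Rightarrow> nat) \<Rightarrow> nat \<Rightarrow> (nat \<Rightarrow> nat) \<Rightarrow> complex" where
  "rademacher m k x = cis (2 * pi * real (x k) / real (m k))"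

(* psi_n = prod_k r_k^{n_k}; the digits n_k vanish for k >= n since M_k >= 2^k > n *)
definition vilenkin :: "(nat \<Rightarrow> nat) \<Rightarrow> nat \<Rightarrow> (nat \<Rightarrow> nat) \<Rightarrow> complex" where
  "vilenkin m n x = (\<Prod>k<n. rademacher m k x ^ digit m n k)"

definition Interval :: "(nat \<Rightarrow> nat) \<Rightarrow> nat \<Rightarrow> (nat \<Rightarrow> nat) \<Rightarrow> (nat \<Rightarrow> nat) set" where
  "Interval m n x = {y \<in> space (Gm m). \<forall>j<n. y j = x j}"

definition Fn :: "(nat \<Rightarrow> nat) \<Rightarrow> nat \<Rightarrow> (nat \<Rightarrow> nat) measure" where
  "Fn m n = sigma (space (Gm m)) {Interval m n x | x. x \<in> space (Gm m)}"

definition martingale :: "(nat \<Rightarrow> nat) \<Rightarrow> (nat \<Rightarrow> (nat \<Rightarrow> nat) \<Rightarrow> complex) \<Rightarrow> bool" where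
  "martingale m f \<longleftrightarrow>
     (\<forall>n. f n \<in> borel_measurable (Fn m n) \<and> integrable (Gm m) (f n)) \<and>
     (\<forall>n. \<forall>A \<in> sets (Fn m n).
        (LINT x:A|Gm m. f (Suc n) x) = (LINT x:A|Gm m. f n x))"

(* x^r on [0,\<infinity>] for r > 0 *)
definition ennpow :: "ennreal \<Rightarrow> real \<Rightarrow> ennreal" where
  "ennpow x r = (if x = \<infinity> then \<infinity> else ennreal (enn2real x powr r))"

definition maxfun :: "(nat \<Rightarrow> (nat \<Rightarrow> nat) \<Rightarrow> complex) \<Rightarrow> (nat \<Rightarrow> nat) \<Rightarrow> ennreal" where
  "maxfun f x = (SUP n. ennreal (cmod (f n x)))"

definition Hp_norm :: "(nat \<Rightarrow> nat) \<Rightarrow> real \<Rightarrow> (nat \<Rightarrow> (nat \<Rightarrow> nat) \<Rightarrow> complex) \<Rightarrow> ennreal" where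
  "Hp_norm m p f = ennpow (\<integral>\<^sup>+ x. ennpow (maxfun f x) p \<partial>Gm m) (1 / p)"

definition fourier_coeff :: "(nat \<Rightarrow> nat) \<Rightarrow> (nat \<Rightarrow> (nat \<Rightarrow> nat) \<Rightarrow> complex) \<Rightarrow> nat \<Rightarrow> complex" where
  "fourier_coeff m f i = lim (\<lambda>k. LINT x|Gm m. f k x * cnj (vilenkin m i x))"

definition partial_sum :: "(nat \<Rightarrow> nat) \<Rightarrow> (nat \<Rightarrow> (nat \<Rightarrow> nat) \<Rightarrow> complex) \<Rightarrow> nat \<Rightarrow> (nat \<Rightarrow> nat) \<Rightarrow> complex" where
  "partial_sum m f n x = (\<Sum>k<n. fourier_coeff m f k * vilenkin m k x)"

definition fejer_mean :: "(nat \<Rightarrow> nat) \<Rightarrow> (nat \<Rightarrow> (nat \<Rightarrow> nat) \<Rightarrow> complex) \<Rightarrow> nat \<Rightarrow> (nat \<Rightarrow> nat) \<Rightarrow> complex" where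
  "fejer_mean m f n x = (\<Sum>k<n. partial_sum m f k x) / of_nat n"

definition weak_Lp_norm :: "'a measure \<Rightarrow> real \<Rightarrow> ('a \<Rightarrow> complex) \<Rightarrow> ennreal" where
  "weak_Lp_norm M p g = ennpow (SUP t\<in>{0<..}. ennreal (t powr p) * emeasure M {x \<in> space M. t < cmod (g x)}) (1 / p)"

end

theory Submission
  imports Defs
begin


lemma space_Gm: "space (Gm m) = {x. \<forall>k. x k < m k}"
  by (auto simp: Gm_def space_PiM space_uniform_count_measure PiE_def extensional_def)

lemma pps: fixes m :: "nat \<Rightarrow> nat" assumes "\<And>k. 0 < m k"
  shows "product_prob_space (\<lambda>k. uniform_count_measure {..<m k})"
proof -
  have pk: "prob_space (uniform_count_measure {..<m k})" for k
    using assms[of k] by (intro prob_space_uniform_count_measure) auto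
  show ?thesis
    unfolding product_prob_space_def product_prob_space_axioms_def product_sigma_finite_def
    using pk prob_space_imp_sigma_finite by blast
qed

lemma prob_Gm: fixes m :: "nat \<Rightarrow> nat" assumes "\<And>k. 0 < m k" shows "prob_space (Gm m)"
proof -
  interpret product_prob_space "\<lambda>k. uniform_count_measure {..<m k}" UNIV by (rule pps[OF assms])
  show ?thesis unfolding Gm_def by unfold_locales
qed

lemma Interval_emb: "Interval m N z = prod_emb UNIV (\<lambda>k. uniform_count_measure {..<m k}) {..<N} (\<Pi>\<^sub>E j\<in>{..<N}. {z j})"
proof (intro set_eqI iffI)
  fix x assume "x \<in> prod_emb UNIV (\<lambda>k. uniform_count_measure {..<m k}) {..<N} (\<Pi>\<^sub>E j\<in>{..<N}. {z j})"
  then have a: "\<forall>k. x k < m k" and b0: "restrict x {..<N} \<in> (\<Pi> j\<in>{..<N}. {z j})"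
    by (auto simp: prod_emb_def space_PiM space_uniform_count_measure PiE_def)
  have b: "\<forall>j<N. x j = z j"
  proof (intro allI impI)
    fix j assume "j < N"
    with Pi_mem[OF b0, of j] show "x j = z j" by simp
  qed
  show "x \<in> Interval m N z" using a b by (auto simp: Interval_def space_Gm)
qed (auto simp: Interval_def prod_emb_def space_Gm space_PiM space_uniform_count_measure PiE_def extensional_def)

lemma Interval_sets: assumes "z \<in> space (Gm m)" shows "Interval m N z \<in> sets (Gm m)"
  unfolding Interval_emb Gm_def using assms
  by (intro sets_PiM_I) (auto simp: space_Gm sets_uniform_count_measure)

lemma Mk_pos: assumes "\<And>k. 0 < m k" shows "0 < Mk m N"
  using assms by (auto simp: Mk_def)

lemma emeasure_Interval: assumes "\<And>k. 0 < m k" "z \<in> space (Gm m)"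
  shows "emeasure (Gm m) (Interval m N z) = ennreal (1 / real (Mk m N))"
proof -
  interpret product_prob_space "\<lambda>k. uniform_count_measure {..<m k}" UNIV by (rule pps[OF assms(1)])
  have "emeasure (Gm m) (Interval m N z) = (\<Prod>j\<in>{..<N}. emeasure (uniform_count_measure {..<m j}) {z j})"
    unfolding Interval_emb Gm_def using assms(2)
    by (intro emeasure_PiM_emb) (auto simp: space_Gm sets_uniform_count_measure)
  also have "\<dots> = (\<Prod>j\<in>{..<N}. ennreal (1 / real (m j)))"
    using assms(2) by (intro prod.cong refl) (auto simp: emeasure_uniform_count_measure space_Gm ennreal_of_nat_eq_real_of_nat divide_ennreal)
  also have "\<dots> = ennreal (\<Prod>j\<in>{..<N}. 1 / real (m j))"
    by (simp add: prod_ennreal)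
  also have "(\<Prod>j\<in>{..<N}. 1 / real (m j)) = 1 / real (Mk m N)"
    by (simp add: Mk_def prod_dividef)
  finally show ?thesis .
qed



definition dep :: "(nat \<Rightarrow> nat) \<Rightarrow> nat \<Rightarrow> ((nat \<Rightarrow> nat) \<Rightarrow> 'b) \<Rightarrow> bool" where
  "dep m N h \<longleftrightarrow> (\<forall>x\<in>space (Gm m). \<forall>y\<in>space (Gm m). (\<forall>j<N. x j = y j) \<longrightarrow> h x = h y)"

definition trunc :: "nat \<Rightarrow> (nat \<Rightarrow> nat) \<Rightarrow> nat \<Rightarrow> nat" where
  "trunc N x = (\<lambda>j. if j < N then x j else 0)"

definition Pre :: "(nat \<Rightarrow> nat) \<Rightarrow> nat \<Rightarrow> (nat \<Rightarrow> nat) set" where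
  "Pre m N = {x \<in> space (Gm m). \<forall>j\<ge>N. x j = 0}"

lemma depD: "dep m N h \<Longrightarrow> x \<in> space (Gm m) \<Longrightarrow> y \<in> space (Gm m) \<Longrightarrow> (\<forall>j<N. x j = y j) \<Longrightarrow> h x = h y"
  unfolding dep_def by blast

lemma trunc_in: assumes "\<And>k. 0 < m k" "x \<in> space (Gm m)" shows "trunc N x \<in> Pre m N"
  using assms by (auto simp: trunc_def Pre_def space_Gm)

lemma trunc_agree: "j < N \<Longrightarrow> trunc N x j = x j"
  by (simp add: trunc_def)

lemma finite_Pre: "finite (Pre m N)"
proof -
  have le: "\<And>x. x < N \<Longrightarrow> m x \<le> (\<Sum>j<N. m j)" by (intro member_le_sum) auto
  have "Pre m N \<subseteq> {f. \<forall>x. (x \<in> {..<N} \<longrightarrow> f x \<in> {..<(\<Sum>j<N. m j)}) \<and> (x \<notin> {..<N} \<longrightarrow> f x = 0)}"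
    using le by (auto simp: Pre_def space_Gm intro: less_le_trans)
  moreover have "finite {f. \<forall>x. (x \<in> {..<N} \<longrightarrow> f x \<in> {..<(\<Sum>j<N. m j)}) \<and> (x \<notin> {..<N} \<longrightarrow> f x = (0::nat))}"
    by (intro finite_set_of_finite_funs) auto
  ultimately show ?thesis by (rule finite_subset)
qed

lemma mem_Interval: assumes "z \<in> Pre m N" "x \<in> space (Gm m)"
  shows "x \<in> Interval m N z \<longleftrightarrow> trunc N x = z"
  using assms by (auto simp: Interval_def Pre_def trunc_def fun_eq_iff)

lemma dep_mono: assumes "dep m N h" "N \<le> N'" shows "dep m N' h"
  unfolding dep_def
proof (intro ballI impI)
  fix x y assume "x \<in> space (Gm m)" "y \<in> space (Gm m)" "\<forall>j<N'. x j = y j"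
  then show "h x = h y" using assms(2) by (intro depD[OF assms(1)]) auto
qed

lemma dep_trunc: assumes "\<And>k. 0 < m k" "dep m N h" "x \<in> space (Gm m)"
  shows "h (trunc N x) = h x"
  using trunc_in[OF assms(1,3), of N] assms(3)
  by (intro depD[OF assms(2)]) (auto simp: trunc_def Pre_def)

lemma dep_preimage: assumes "\<And>k. 0 < m k" "dep m N h"
  shows "{x \<in> space (Gm m). h x \<in> B} = \<Union> ((\<lambda>z. Interval m N z) ` {z \<in> Pre m N. h z \<in> B})"
proof (intro set_eqI iffI)
  fix x assume x: "x \<in> {x \<in> space (Gm m). h x \<in> B}"
  then have "trunc N x \<in> {z \<in> Pre m N. h z \<in> B}" "x \<in> Interval m N (trunc N x)"
    using trunc_in[OF assms(1)] dep_trunc[OF assms] mem_Interval[OF trunc_in[OF assms(1)]] by auto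
  then show "x \<in> \<Union> ((\<lambda>z. Interval m N z) ` {z \<in> Pre m N. h z \<in> B})" by blast
next
  fix x assume "x \<in> \<Union> ((\<lambda>z. Interval m N z) ` {z \<in> Pre m N. h z \<in> B})"
  then obtain z where z: "z \<in> Pre m N" "h z \<in> B" "x \<in> Interval m N z" by blast
  then have xs: "x \<in> space (Gm m)" by (auto simp: Interval_def)
  have "trunc N x = z" using mem_Interval[OF z(1) xs] z(3) by simp
  then have "h x = h z" using dep_trunc[OF assms xs] by simp
  with z xs show "x \<in> {x \<in> space (Gm m). h x \<in> B}" by simp
qed

lemma Pre_space: "z \<in> Pre m N \<Longrightarrow> z \<in> space (Gm m)"
  by (simp add: Pre_def)

lemma dep_meas_Gm: assumes "\<And>k. 0 < m k" "dep m N h"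
  shows "h \<in> measurable (Gm m) (count_space UNIV)"
proof (rule measurableI)
  fix B :: "'a set"
  have "h -` B \<inter> space (Gm m) = \<Union> ((\<lambda>z. Interval m N z) ` {z \<in> Pre m N. h z \<in> B})"
    using dep_preimage[OF assms, of B] by auto
  also have "\<dots> \<in> sets (Gm m)"
    using finite_Pre[of m N] Interval_sets[OF Pre_space]
    by (intro sets.finite_Union) auto
  finally show "h -` B \<inter> space (Gm m) \<in> sets (Gm m)" .
qed auto

lemma sets_Fn: "sets (Fn m N) = sigma_sets (space (Gm m)) {Interval m N x | x. x \<in> space (Gm m)}"
  unfolding Fn_def by (rule sets_measure_of) (auto simp: Interval_def)

lemma space_Fn: "space (Fn m N) = space (Gm m)"
  unfolding Fn_def by (rule space_measure_of) (auto simp: Interval_def)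

lemma dep_meas_Fn: assumes "\<And>k. 0 < m k" "dep m N h"
  shows "h \<in> measurable (Fn m N) (count_space UNIV)"
proof (rule measurableI)
  fix B :: "'a set"
  have "h -` B \<inter> space (Fn m N) = \<Union> ((\<lambda>z. Interval m N z) ` {z \<in> Pre m N. h z \<in> B})"
    using dep_preimage[OF assms, of B] by (auto simp: space_Fn)
  also have "\<dots> \<in> sets (Fn m N)"
    using finite_Pre[of m N]
    by (intro sets.finite_Union) (auto simp: sets_Fn intro!: sigma_sets.Basic dest: Pre_space)
  finally show "h -` B \<inter> space (Fn m N) \<in> sets (Fn m N)" .
qed auto

lemma meas_count_borel: "h \<in> measurable M (count_space UNIV) \<Longrightarrow> (h :: _ \<Rightarrow> 'b::topological_space) \<in> borel_measurable M"
  by (rule measurable_compose[OF _ measurable_count_space_eq1[THEN iffD2]]) auto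

lemma Fn_dep: assumes "A \<in> sets (Fn m N)" shows "dep m N (\<lambda>x. x \<in> A)"
  using assms unfolding sets_Fn
proof (induction rule: sigma_sets.induct)
  case (Basic a)
  then obtain z where "a = Interval m N z" by auto
  then show ?case by (auto simp: dep_def Interval_def)
next
  case Empty then show ?case by (simp add: dep_def)
next
  case (Compl a)
  show ?case unfolding dep_def
  proof (intro ballI impI)
    fix x y assume "x \<in> space (Gm m)" "y \<in> space (Gm m)" "\<forall>j<N. x j = y j"
    then have "(x \<in> a) = (y \<in> a)" by (rule depD[OF Compl.IH])
    then show "(x \<in> space (Gm m) - a) = (y \<in> space (Gm m) - a)"
      using \<open>x \<in> space (Gm m)\<close> \<open>y \<in> space (Gm m)\<close> by blast
  qed
next
  case (Union a)
  show ?case unfolding dep_def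
  proof (intro ballI impI)
    fix x y assume xy: "x \<in> space (Gm m)" "y \<in> space (Gm m)" "\<forall>j<N. x j = y j"
    have "\<And>i. (x \<in> a i) = (y \<in> a i)" using depD[OF Union.IH xy] by blast
    then show "(x \<in> \<Union> (range a)) = (y \<in> \<Union> (range a))" by simp
  qed
qed

lemma Fn_dep_ind: assumes "A \<in> sets (Fn m N)" shows "dep m N (indicator A :: _ \<Rightarrow> 'b::zero_neq_one)"
  unfolding dep_def
proof (intro ballI impI)
  fix x y assume "x \<in> space (Gm m)" "y \<in> space (Gm m)" "\<forall>j<N. x j = y j"
  then have "(x \<in> A) = (y \<in> A)" by (rule depD[OF Fn_dep[OF assms]])
  then show "(indicator A x :: 'b) = indicator A y" by (simp add: indicator_def)
qed



lemma INT: fixes h :: "(nat \<Rightarrow> nat) \<Rightarrow> complex"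
  assumes m: "\<And>k. 0 < m k" and d: "dep m N h"
  shows "integral\<^sup>L (Gm m) h = (\<Sum>z\<in>Pre m N. h z) / of_nat (Mk m N)"
proof -
  interpret prob_space "Gm m" by (rule prob_Gm[OF m])
  have eq: "h x = (\<Sum>z\<in>Pre m N. indicator (Interval m N z) x *\<^sub>R h z)" if x: "x \<in> space (Gm m)" for x
  proof -
    have "(\<Sum>z\<in>Pre m N. indicator (Interval m N z) x *\<^sub>R h z) = (\<Sum>z\<in>Pre m N. if trunc N x = z then h z else 0)"
      using mem_Interval[OF _ x] by (intro sum.cong refl) (auto simp: indicator_def)
    also have "\<dots> = h (trunc N x)" using finite_Pre trunc_in[OF m x] by simp
    also have "\<dots> = h x" by (rule dep_trunc[OF m d x])
    finally show ?thesis by simp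
  qed
  have meas: "measure (Gm m) (Interval m N z) = 1 / real (Mk m N)" if "z \<in> Pre m N" for z
    using emeasure_Interval[OF m Pre_space[OF that]] by (simp add: measure_def)
  have intg: "integrable (Gm m) (\<lambda>x. indicator (Interval m N z) x *\<^sub>R c)" if "z \<in> Pre m N" for z and c :: complex
    using Pre_space[OF that] emeasure_Interval[OF m Pre_space[OF that], of N]
    by (intro integrable_scaleR_left integrable_real_indicator Interval_sets) auto
  have "integral\<^sup>L (Gm m) h = integral\<^sup>L (Gm m) (\<lambda>x. \<Sum>z\<in>Pre m N. indicator (Interval m N z) x *\<^sub>R h z)"
    by (rule Bochner_Integration.integral_cong[OF refl eq])
  also have "\<dots> = (\<Sum>z\<in>Pre m N. integral\<^sup>L (Gm m) (\<lambda>x. indicator (Interval m N z) x *\<^sub>R h z))"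
    by (rule Bochner_Integration.integral_sum[where f="\<lambda>z x. indicator (Interval m N z) x *\<^sub>R h z"]) (rule intg)
  also have "\<dots> = (\<Sum>z\<in>Pre m N. (1 / real (Mk m N)) *\<^sub>R h z)"
  proof (intro sum.cong refl)
    fix z assume z: "z \<in> Pre m N"
    have ii: "integrable (Gm m) (indicator (Interval m N z) :: _ \<Rightarrow> real)"
      using Pre_space[OF z] emeasure_Interval[OF m Pre_space[OF z], of N]
      by (intro integrable_real_indicator Interval_sets) auto
    have sp: "Interval m N z \<inter> space (Gm m) = Interval m N z" unfolding Interval_def by blast
    have "integral\<^sup>L (Gm m) (\<lambda>x. indicator (Interval m N z) x *\<^sub>R h z) = integral\<^sup>L (Gm m) (indicator (Interval m N z)) *\<^sub>R h z"
      by (rule integral_scaleR_left) (rule ii)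
    also have "integral\<^sup>L (Gm m) (indicator (Interval m N z)) = measure (Gm m) (Interval m N z \<inter> space (Gm m))"
      by (rule Bochner_Integration.integral_indicator)
    also have "\<dots> = 1 / real (Mk m N)" unfolding sp by (rule meas[OF z])
    finally show "integral\<^sup>L (Gm m) (\<lambda>x. indicator (Interval m N z) x *\<^sub>R h z) = (1 / real (Mk m N)) *\<^sub>R h z" .
  qed
  also have "\<dots> = (\<Sum>z\<in>Pre m N. h z) / of_nat (Mk m N)"
    by (simp add: scaleR_conv_of_real divide_inverse sum_distrib_left mult.commute)
  finally show ?thesis .
qed

definition gfun :: "(nat \<Rightarrow> nat) \<Rightarrow> nat \<Rightarrow> real \<Rightarrow> (nat \<Rightarrow> nat) \<Rightarrow> complex" where
  "gfun m k a x = (if \<forall>j<k. x j = 0 then complex_of_real a * rademacher m k x else 0)"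

lemma dep_gfun: "dep m (Suc k) (gfun m k a)"
  by (auto simp: dep_def gfun_def rademacher_def)

lemma step_mod: "(a::nat) < m \<Longrightarrow> (a + 1) mod m = (if a + 1 = m then 0 else a + 1)"
  by auto

lemma cis_ne1: assumes "2 \<le> (n::nat)" shows "cis (2 * pi / real n) \<noteq> 1"
proof
  assume "cis (2 * pi / real n) = 1"
  then have "cos (2 * pi / real n) = 1" by (metis cis.sel(1) one_complex.sel(1))
  then obtain i :: int where i: "2 * pi / real n = real_of_int i * 2 * pi" by (auto simp: cos_one_2pi_int)
  then have "1 / real n = real_of_int i" using pi_gt_zero
    by (metis (no_types, opaque_lifting) divide_divide_eq_left' divide_self_if mult.commute
        nonzero_mult_div_cancel_right pi_neq_zero times_divide_eq_left zero_neq_numeral)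
  moreover have "0 < 1 / real n" "1 / real n < 1" using assms by auto
  ultimately show False by (metis of_int_0_less_iff of_int_less_1_iff not_less zero_less_one zle_add1_eq_le
        add_0 of_int_less_iff)
qed

lemma ZERO: fixes h :: "(nat \<Rightarrow> nat) \<Rightarrow> complex"
  assumes m2: "\<And>k. 2 \<le> m k" and d: "dep m k h"
  shows "integral\<^sup>L (Gm m) (\<lambda>x. h x * gfun m k a x) = 0"
proof -
  have m: "0 < m k'" for k' using m2[of k'] by simp
  let ?P = "Pre m (Suc k)"
  let ?F = "\<lambda>x. h x * gfun m k a x"
  define \<sigma> where "\<sigma> z = z(k := (z k + 1) mod m k)" for z :: "nat \<Rightarrow> nat"
  define \<omega> where "\<omega> = cis (2 * pi / real (m k))"
  have dF: "dep m (Suc k) ?F"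
    unfolding dep_def
  proof (intro ballI impI)
    fix x y assume xy: "x \<in> space (Gm m)" "y \<in> space (Gm m)" "\<forall>j<Suc k. x j = y j"
    have "h x = h y" using xy by (intro depD[OF dep_mono[OF d, of "Suc k"]]) auto
    moreover have "gfun m k a x = gfun m k a y" using xy by (intro depD[OF dep_gfun]) auto
    ultimately show "h x * gfun m k a x = h y * gfun m k a y" by simp
  qed
  have sub: "\<sigma> ` ?P \<subseteq> ?P"
    using m by (auto simp: \<sigma>_def Pre_def space_Gm)
  have inj: "inj_on \<sigma> ?P"
  proof (rule inj_onI)
    fix x y assume x: "x \<in> ?P" and y: "y \<in> ?P" and e: "\<sigma> x = \<sigma> y"
    have xk: "x k < m k" and yk: "y k < m k" using x y by (auto simp: Pre_def space_Gm)
    have "(x k + 1) mod m k = (y k + 1) mod m k" using fun_cong[OF e, of k] by (simp add: \<sigma>_def)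
    then have "x k = y k" unfolding step_mod[OF xk] step_mod[OF yk] by (simp split: if_splits)
    moreover have "x j = y j" if "j \<noteq> k" for j using fun_cong[OF e, of j] that by (simp add: \<sigma>_def)
    ultimately show "x = y" by (intro ext) metis
  qed
  have img: "\<sigma> ` ?P = ?P" by (rule endo_inj_surj[OF finite_Pre sub inj])
  have Fs: "?F (\<sigma> z) = \<omega> * ?F z" if z: "z \<in> ?P" for z
  proof -
    have zs: "z \<in> space (Gm m)" "\<sigma> z \<in> space (Gm m)" using z sub by (auto simp: Pre_def)
    have hs: "h (\<sigma> z) = h z" using zs by (intro depD[OF d]) (auto simp: \<sigma>_def)
    have rs: "rademacher m k (\<sigma> z) = \<omega> * rademacher m k z"
    proof -
      have zk: "z k < m k" using zs by (auto simp: space_Gm)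
      have "rademacher m k (\<sigma> z) = cis (2 * pi * real ((z k + 1) mod m k) / real (m k))"
        by (simp add: rademacher_def \<sigma>_def)
      also have "\<dots> = cis (2 * pi * real (z k + 1) / real (m k))"
      proof (cases "z k + 1 = m k")
        case True
        have "cis (2 * pi * real (z k + 1) / real (m k)) = cis (2 * pi)" using True m[of k] by simp
        then show ?thesis using True by simp
      next
        case False then show ?thesis using step_mod[OF zk] by simp
      qed
      also have "\<dots> = cis (2 * pi / real (m k) + 2 * pi * real (z k) / real (m k))"
        by (rule arg_cong[where f=cis]) (simp add: add_divide_distrib distrib_left)
      also have "\<dots> = \<omega> * rademacher m k z"
        by (simp add: \<omega>_def rademacher_def cis_mult[symmetric])
      finally show ?thesis .
    qed
    have zc: "(\<forall>j<k. \<sigma> z j = 0) = (\<forall>j<k. z j = 0)" by (simp add: \<sigma>_def)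
    show ?thesis
    proof (cases "\<forall>j<k. z j = 0")
      case True
      then have "\<forall>j<k. \<sigma> z j = 0" using zc by simp
      then show ?thesis using True hs rs by (simp add: gfun_def)
    next
      case False
      then have "\<not> (\<forall>j<k. \<sigma> z j = 0)" using zc by simp
      then show ?thesis using False unfolding gfun_def by (simp only: if_False) simp
    qed
  qed
  have "(\<Sum>z\<in>?P. ?F z) = (\<Sum>z\<in>\<sigma> ` ?P. ?F z)" by (simp add: img)
  also have "\<dots> = (\<Sum>z\<in>?P. ?F (\<sigma> z))" by (rule sum.reindex[OF inj, unfolded comp_def])
  also have "\<dots> = \<omega> * (\<Sum>z\<in>?P. ?F z)" by (simp add: Fs sum_distrib_left)
  finally have "(1 - \<omega>) * (\<Sum>z\<in>?P. ?F z) = 0" by (simp add: algebra_simps)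
  moreover have "\<omega> \<noteq> 1" unfolding \<omega>_def by (rule cis_ne1[OF m2])
  ultimately have "(\<Sum>z\<in>?P. ?F z) = 0" by simp
  then show ?thesis using INT[OF m dF] by simp
qed



lemma Mk_Suc: "Mk m (Suc j) = m j * Mk m j"
  by (simp add: Mk_def)

lemma Mk_split: assumes "j \<le> k" shows "Mk m k = Mk m j * prod m {j..<k}"
proof -
  have "{..<k} = {..<j} \<union> {j..<k}" using assms by auto
  then show ?thesis unfolding Mk_def by (simp add: prod.union_disjoint ivl_disj_int)
qed

lemma Mk_ge: assumes "\<And>k. 2 \<le> m k" shows "2 ^ j \<le> Mk m j"
proof (induction j)
  case 0 then show ?case by (simp add: Mk_def)
next
  case (Suc j)
  have "2 ^ Suc j = 2 * 2 ^ j" by simp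
  also have "\<dots> \<le> m j * Mk m j" using Suc assms[of j] by (intro mult_le_mono) auto
  finally show ?case by (simp add: Mk_Suc)
qed

lemma Mk_gt: assumes "\<And>k. 2 \<le> m k" shows "j < Mk m j"
  using Mk_ge[of m, OF assms, of j] less_exp[of j] by linarith

lemma Mk_mono: assumes "\<And>k. 2 \<le> m k" "j \<le> k" shows "Mk m j \<le> Mk m k"
proof -
  have P: "1 \<le> prod m {j..<k}" using assms(1) by (intro prod_ge_1) (metis le_trans one_le_numeral)
  have "Mk m j = Mk m j * 1" by simp
  also have "\<dots> \<le> Mk m j * prod m {j..<k}" using P by (rule mult_le_mono2)
  finally show ?thesis using Mk_split[OF assms(2), of m] by simp
qed

lemma Mk_strict: assumes "\<And>k. 2 \<le> m k" "j < k" shows "Mk m j < Mk m k"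
proof -
  have pos: "0 < Mk m j" using assms(1) by (intro Mk_pos) (metis less_le_trans zero_less_numeral)
  have "Mk m j < 2 * Mk m j" using pos by simp
  also have "\<dots> \<le> m j * Mk m j" using assms(1)[of j] by (rule mult_le_mono1)
  also have "\<dots> = Mk m (Suc j)" by (simp add: Mk_Suc)
  finally have "Mk m j < Mk m (Suc j)" .
  also have "\<dots> \<le> Mk m k" using assms by (intro Mk_mono) auto
  finally show ?thesis .
qed

lemma digit_small: assumes "\<And>k. 2 \<le> m k" "i < Mk m k" "k \<le> j" shows "digit m i j = 0"
proof -
  have "i < Mk m j" using assms Mk_mono[of m, OF assms(1) assms(3)] by linarith
  then show ?thesis by (simp add: digit_def)
qed

lemma digit_Mk: assumes m2: "\<And>k. 2 \<le> m k" shows "digit m (Mk m k) j = (if j = k then 1 else 0)"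
proof (cases j k rule: linorder_cases)
  case less
  have pos: "0 < Mk m j" using m2 by (intro Mk_pos) (metis less_le_trans zero_less_numeral)
  have "Mk m k div Mk m j = prod m {j..<k}" using Mk_split[of j k m] less pos by simp
  moreover have "m j dvd prod m {j..<k}" using less by (intro dvd_prodI) auto
  ultimately show ?thesis using less by (simp add: digit_def)
next
  case equal
  have pos: "0 < Mk m j" using m2 by (intro Mk_pos) (metis less_le_trans zero_less_numeral)
  then show ?thesis using equal m2[of k] by (simp add: digit_def)
next
  case greater
  then show ?thesis using Mk_strict[of m, OF m2 greater] by (simp add: digit_def)
qed

lemma vilenkin_Mk: assumes m2: "\<And>k. 2 \<le> m k" shows "vilenkin m (Mk m k) x = rademacher m k x"
proof -
  have "vilenkin m (Mk m k) x = (\<Prod>j<Mk m k. if j = k then rademacher m k x else 1)"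
    unfolding vilenkin_def by (intro prod.cong refl) (simp add: digit_Mk[of m, OF m2])
  also have "\<dots> = rademacher m k x" using Mk_gt[of m, OF m2, of k] by simp
  finally show ?thesis .
qed

lemma dep_vilenkin: assumes m2: "\<And>k. 2 \<le> m k" "i < Mk m k" shows "dep m k (vilenkin m i)"
  unfolding dep_def
proof (intro ballI impI)
  fix x y :: "nat \<Rightarrow> nat" assume xy: "\<forall>j<k. x j = y j"
  show "vilenkin m i x = vilenkin m i y"
    unfolding vilenkin_def
  proof (intro prod.cong refl)
    fix j assume "j \<in> {..<i}"
    show "rademacher m j x ^ digit m i j = rademacher m j y ^ digit m i j"
    proof (cases "j < k")
      case True then show ?thesis using xy by (simp add: rademacher_def)
    next
      case False then show ?thesis using digit_small[of m, OF assms, of j] by simp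
    qed
  qed
qed

lemma norm_gfun: "cmod (gfun m k a x) = (if \<forall>j<k. x j = 0 then \<bar>a\<bar> else 0)"
proof (cases "\<forall>j<k. x j = 0")
  case True then show ?thesis by (simp add: gfun_def rademacher_def norm_mult)
next
  case False then show ?thesis unfolding gfun_def by (simp only: if_not_P[OF False]) simp
qed

definition atom :: "(nat \<Rightarrow> nat) \<Rightarrow> nat \<Rightarrow> real \<Rightarrow> nat \<Rightarrow> (nat \<Rightarrow> nat) \<Rightarrow> complex" where
  "atom m k a n = (if n \<le> k then (\<lambda>_. 0) else gfun m k a)"

lemma gfun_meas: assumes m: "\<And>k. 0 < m k" shows "gfun m k a \<in> borel_measurable (Gm m)"
  by (rule meas_count_borel[OF dep_meas_Gm[OF m dep_gfun]])

lemma gfun_int: assumes m: "\<And>k. 0 < m k" shows "integrable (Gm m) (gfun m k a)"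
proof -
  interpret prob_space "Gm m" by (rule prob_Gm[OF m])
  show ?thesis
    by (rule integrable_const_bound[where B="\<bar>a\<bar>"]) (auto simp: norm_gfun gfun_meas[OF m])
qed

lemma atom_martingale: assumes m2: "\<And>k. 2 \<le> m k" shows "martingale m (atom m k a)"
proof -
  have m: "0 < m k'" for k' using m2[of k'] by simp
  have meas: "atom m k a n \<in> borel_measurable (Fn m n)" for n
  proof (cases "n \<le> k")
    case True then show ?thesis by (simp add: atom_def)
  next
    case False
    then have "dep m n (gfun m k a)" by (intro dep_mono[OF dep_gfun]) auto
    then show ?thesis using False by (simp add: atom_def meas_count_borel[OF dep_meas_Fn[OF m]])
  qed
  have int: "integrable (Gm m) (atom m k a n)" for n
    using gfun_int[OF m] by (simp add: atom_def)
  have cond: "(LINT x:A|Gm m. atom m k a (Suc n) x) = (LINT x:A|Gm m. atom m k a n x)"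
    if A: "A \<in> sets (Fn m n)" for n A
  proof (cases n k rule: linorder_cases)
    case less then show ?thesis by (simp add: atom_def)
  next
    case greater then show ?thesis by (simp add: atom_def)
  next
    case equal
    have d: "dep m k (indicator A :: _ \<Rightarrow> complex)" using Fn_dep_ind[OF A] equal by simp
    have "(LINT x:A|Gm m. atom m k a (Suc n) x) = integral\<^sup>L (Gm m) (\<lambda>x. indicator A x * gfun m k a x)"
      unfolding set_lebesgue_integral_def using equal
      by (intro Bochner_Integration.integral_cong refl) (simp add: atom_def indicator_def)
    also have "\<dots> = 0" by (rule ZERO[of m, OF m2 d])
    finally show ?thesis using equal by (simp add: atom_def)
  qed
  show ?thesis unfolding martingale_def using meas int cond by blast
qed



lemma maxfun_atom: "maxfun (atom m k a) x = ennreal (cmod (gfun m k a x))"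
  unfolding maxfun_def
proof (rule antisym)
  show "(SUP n. ennreal (cmod (atom m k a n x))) \<le> ennreal (cmod (gfun m k a x))"
    by (rule SUP_least) (auto simp: atom_def)
  show "ennreal (cmod (gfun m k a x)) \<le> (SUP n. ennreal (cmod (atom m k a n x)))"
    by (rule SUP_upper2[of "Suc k"]) (auto simp: atom_def)
qed

lemma ennpow_ennreal: "0 \<le> c \<Longrightarrow> ennpow (ennreal c) r = ennreal (c powr r)"
  by (simp add: ennpow_def)

lemma Hp_atom: assumes m2: "\<And>k. 2 \<le> m k" and p: "0 < p" and a: "a = real (Mk m k) powr (1/p)"
  shows "Hp_norm m p (atom m k a) = 1"
proof -
  have m: "0 < m k'" for k' using m2[of k'] by simp
  have Mpos: "0 < real (Mk m k)" using Mk_pos[of m k] m by simp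
  have a0: "0 \<le> a" using a by simp
  have ap: "a powr p = real (Mk m k)" using a p Mpos by (simp add: powr_powr)
  let ?I = "Interval m k (\<lambda>_. 0)"
  have z: "(\<lambda>_. 0) \<in> space (Gm m)" using m by (simp add: space_Gm)
  have "(\<integral>\<^sup>+x. ennpow (maxfun (atom m k a) x) p \<partial>Gm m) = (\<integral>\<^sup>+x. ennreal (real (Mk m k)) * indicator ?I x \<partial>Gm m)"
  proof (rule nn_integral_cong)
    fix x assume x: "x \<in> space (Gm m)"
    have "ennpow (maxfun (atom m k a) x) p = ennreal ((cmod (gfun m k a x)) powr p)"
      by (simp add: maxfun_atom ennpow_ennreal)
    also have "\<dots> = ennreal (real (Mk m k)) * indicator ?I x"
    proof (cases "\<forall>j<k. x j = 0")
      case True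
      then have "x \<in> ?I" using x by (simp add: Interval_def)
      then show ?thesis using True a0 ap by (simp add: norm_gfun)
    next
      case False
      then have "x \<notin> ?I" using x by (auto simp: Interval_def)
      moreover have "cmod (gfun m k a x) = 0" by (simp only: norm_gfun if_not_P[OF False])
      ultimately show ?thesis by simp
    qed
    finally show "ennpow (maxfun (atom m k a) x) p = ennreal (real (Mk m k)) * indicator ?I x" .
  qed
  also have "\<dots> = ennreal (real (Mk m k)) * emeasure (Gm m) ?I"
    by (rule nn_integral_cmult_indicator[OF Interval_sets[OF z]])
  also have "\<dots> = ennreal (real (Mk m k)) * ennreal (1 / real (Mk m k))"
    by (simp add: emeasure_Interval[OF m z])
  also have "\<dots> = 1" using Mpos by (simp add: ennreal_mult'[symmetric])
  finally show ?thesis unfolding Hp_norm_def by (simp add: ennpow_def)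
qed

lemma fc_eq: "fourier_coeff m (atom m k a) i = integral\<^sup>L (Gm m) (\<lambda>x. gfun m k a x * cnj (vilenkin m i x))"
  unfolding fourier_coeff_def
  by (rule limI, rule tendsto_eventually, rule eventually_sequentiallyI[of "Suc k"]) (simp add: atom_def)

lemma dep_comp: assumes "dep m N h" shows "dep m N (\<lambda>x. f (h x))"
  unfolding dep_def
proof (intro ballI impI)
  fix x y assume "x \<in> space (Gm m)" "y \<in> space (Gm m)" "\<forall>j<N. x j = y j"
  then have "h x = h y" by (rule depD[OF assms])
  then show "f (h x) = f (h y)" by simp
qed

lemma fc_small: assumes m2: "\<And>k. 2 \<le> m k" and i: "i < Mk m k"
  shows "fourier_coeff m (atom m k a) i = 0"
proof -
  have d: "dep m k (\<lambda>x. cnj (vilenkin m i x))" by (rule dep_comp[OF dep_vilenkin[of m, OF m2 i]])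
  have "fourier_coeff m (atom m k a) i = integral\<^sup>L (Gm m) (\<lambda>x. cnj (vilenkin m i x) * gfun m k a x)"
    by (simp add: fc_eq mult.commute)
  also have "\<dots> = 0" by (rule ZERO[of m, OF m2 d])
  finally show ?thesis .
qed

lemma fc_Mk: assumes m2: "\<And>k. 2 \<le> m k"
  shows "fourier_coeff m (atom m k a) (Mk m k) = complex_of_real (a / real (Mk m k))"
proof -
  have m: "0 < m k'" for k' using m2[of k'] by simp
  let ?h = "\<lambda>x::nat\<Rightarrow>nat. if \<forall>j<k. x j = 0 then complex_of_real a else 0"
  have rr: "rademacher m k x * cnj (rademacher m k x) = 1" for x
    by (simp add: rademacher_def cis_cnj cis_mult)
  have pt: "gfun m k a x * cnj (rademacher m k x) = ?h x" for x
  proof (cases "\<forall>j<k. x j = 0")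
    case True then show ?thesis by (simp add: gfun_def rr mult.assoc)
  next
    case False then show ?thesis unfolding gfun_def by (simp only: if_not_P[OF False]) simp
  qed
  have "fourier_coeff m (atom m k a) (Mk m k) = integral\<^sup>L (Gm m) ?h"
    unfolding fc_eq vilenkin_Mk[of m, OF m2] pt by simp
  also have "\<dots> = (\<Sum>z\<in>Pre m k. ?h z) / of_nat (Mk m k)"
    by (rule INT[OF m]) (auto simp: dep_def)
  also have "(\<Sum>z\<in>Pre m k. ?h z) = (\<Sum>z\<in>Pre m k. if z = (\<lambda>_. 0) then complex_of_real a else 0)"
  proof (intro sum.cong refl)
    fix z assume z: "z \<in> Pre m k"
    have "(\<forall>j<k. z j = 0) = (z = (\<lambda>_. 0))"
    proof
      assume h: "\<forall>j<k. z j = 0"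
      show "z = (\<lambda>_. 0)"
      proof
        fix j show "z j = 0" using h z by (cases "j < k") (auto simp: Pre_def)
      qed
    qed simp
    then show "?h z = (if z = (\<lambda>_. 0) then complex_of_real a else 0)" by simp
  qed
  also have "\<dots> = complex_of_real a"
    using finite_Pre[of m k] m by (simp add: Pre_def space_Gm)
  finally show ?thesis by simp
qed

lemma ps_small: assumes m2: "\<And>k. 2 \<le> m k" and "j \<le> Mk m k"
  shows "partial_sum m (atom m k a) j x = 0"
  unfolding partial_sum_def using assms by (intro sum.neutral) (auto simp: fc_small[of m, OF m2])

lemma ps_M1: assumes m2: "\<And>k. 2 \<le> m k"
  shows "partial_sum m (atom m k a) (Suc (Mk m k)) x = complex_of_real (a / real (Mk m k)) * rademacher m k x"
proof -
  have "partial_sum m (atom m k a) (Suc (Mk m k)) x = partial_sum m (atom m k a) (Mk m k) x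
      + fourier_coeff m (atom m k a) (Mk m k) * vilenkin m (Mk m k) x"
    by (simp add: partial_sum_def)
  then show ?thesis by (simp add: ps_small[of m, OF m2] fc_Mk[of m, OF m2] vilenkin_Mk[of m, OF m2])
qed

lemma fejer_atom: assumes m2: "\<And>k. 2 \<le> m k"
  shows "fejer_mean m (atom m k a) (Mk m k + 2) x
     = complex_of_real (a / real (Mk m k)) * rademacher m k x / of_nat (Mk m k + 2)"
proof -
  have "(\<Sum>j<Mk m k + 2. partial_sum m (atom m k a) j x)
      = (\<Sum>j<Mk m k. partial_sum m (atom m k a) j x) + partial_sum m (atom m k a) (Mk m k) x
        + partial_sum m (atom m k a) (Suc (Mk m k)) x"
    by (simp add: numeral_2_eq_2)
  also have "\<dots> = partial_sum m (atom m k a) (Suc (Mk m k)) x"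
    by (simp add: ps_small[of m, OF m2])
  finally show ?thesis unfolding fejer_mean_def by (simp add: ps_M1[of m, OF m2])
qed

lemma ennpow_mono: assumes "x \<le> y" "0 \<le> r" shows "ennpow x r \<le> ennpow y r"
proof (cases "y = \<infinity>")
  case True then show ?thesis by (simp add: ennpow_def)
next
  case False
  then have "x \<noteq> \<infinity>" using assms(1) by (auto simp: top_unique)
  moreover have "enn2real x \<le> enn2real y" using assms(1) False by (intro enn2real_mono) (auto simp: less_top)
  ultimately show ?thesis using False assms(2) by (simp add: ennpow_def ennreal_leI powr_mono2)
qed

lemma weak_const: assumes P: "prob_space M" and p: "0 < p" and C: "0 < C"
  and g: "\<And>x. x \<in> space M \<Longrightarrow> cmod (g x) = C"
  shows "ennreal (C / 2) \<le> weak_Lp_norm M p g"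
proof -
  interpret prob_space M by (rule P)
  have "{x \<in> space M. C / 2 < cmod (g x)} = space M" using g C by auto
  then have "ennreal ((C/2) powr p) = ennreal ((C/2) powr p) * emeasure M {x \<in> space M. C / 2 < cmod (g x)}"
    by (simp add: emeasure_space_1)
  also have "\<dots> \<le> (SUP t\<in>{0<..}. ennreal (t powr p) * emeasure M {x \<in> space M. t < cmod (g x)})"
    using C by (intro SUP_upper) auto
  finally have "ennpow (ennreal ((C/2) powr p)) (1/p) \<le> weak_Lp_norm M p g"
    unfolding weak_Lp_norm_def using p by (intro ennpow_mono) auto
  moreover have "ennpow (ennreal ((C/2) powr p)) (1/p) = ennreal (C/2)"
    using p C by (simp add: ennpow_ennreal powr_powr)
  ultimately show ?thesis by simp
qed



lemma exists_big_n:
  fixes X :: "nat \<Rightarrow> real"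
  assumes "limsup (\<lambda>n. ereal (X n)) = \<infinity>"
  shows "\<exists>n\<ge>N. L < X n"
proof (rule ccontr)
  assume "\<not> (\<exists>n\<ge>N. L < X n)"
  then have "eventually (\<lambda>n. ereal (X n) \<le> ereal L) sequentially"
    by (intro eventually_sequentiallyI[of N]) auto
  then have "limsup (\<lambda>n. ereal (X n)) \<le> ereal L" by (rule Limsup_bounded)
  with assms show False by simp
qed

lemma key:
  fixes m :: "nat \<Rightarrow> nat" and p :: real and \<phi> :: "nat \<Rightarrow> real"
  assumes m2: "\<And>k. 2 \<le> m k" and B: "\<And>k. m k \<le> B" and p: "0 < p" and q: "0 < 1/p - 2"
    and phi1: "\<And>n. 1 \<le> \<phi> n" and mono: "mono \<phi>"
    and ls: "limsup (\<lambda>n. ereal ((real n + 1) powr (1/p - 2) / \<phi> n)) = \<infinity>"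
  shows "\<exists>k. L < real (Mk m k) powr (1/p) / real (Mk m k) / ((real (Mk m k) + 2) * \<phi> (Mk m k + 2))"
proof -
  define q where "q = 1/p - 2"
  have q0: "0 < q" using q by (simp add: q_def)
  define Bp where "Bp = real B + 2"
  have Bp: "0 < Bp" by (simp add: Bp_def)
  define K where "K = 3 * Bp powr q"
  have K: "0 < K" using Bp by (simp add: K_def)
  define L' where "L' = max L 0 * K"
  obtain n where n3: "n \<ge> 3" and nL: "L' < (real n + 1) powr q / \<phi> n"
    using exists_big_n[OF ls, of 3 L'] unfolding q_def by blast
  define S where "S = {k. Mk m k + 2 \<le> n}"
  have finS: "finite S"
  proof (rule finite_subset)
    show "S \<subseteq> {..n}"
    proof
      fix x assume "x \<in> S"
      then have "Mk m x + 2 \<le> n" by (simp add: S_def)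
      moreover have "x < Mk m x" by (rule Mk_gt[of m, OF m2])
      ultimately show "x \<in> {..n}" by simp
    qed
  qed simp
  have "0 \<in> S" using n3 by (simp add: S_def Mk_def)
  define k where "k = Max S"
  have kS: "k \<in> S" unfolding k_def using finS \<open>0 \<in> S\<close> by (intro Max_in) auto
  have "Suc k \<notin> S" using finS k_def Max_ge[OF finS] by (metis Suc_n_not_le_n)
  then have nlt: "n < Mk m (Suc k) + 2" by (simp add: S_def)
  define M where "M = Mk m k"
  have Mn: "M + 2 \<le> n" using kS by (simp add: S_def M_def)
  have m0: "0 < m k'" for k' using m2[of k'] by simp
  have M1: "1 \<le> M" using Mk_pos[of m k, OF m0] by (simp add: M_def)
  let ?R = "real M"
  have R1: "1 \<le> ?R" using M1 by simp
  have Rpos: "0 < ?R" using R1 by simp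
  have "n + 1 \<le> m k * M + 2" using nlt by (simp add: Mk_Suc M_def)
  also have "\<dots> \<le> B * M + 2 * M" using B[of k] M1 by (intro add_mono mult_le_mono1) simp_all
  also have "\<dots> = (B + 2) * M" by (simp add: algebra_simps)
  finally have "real (n + 1) \<le> real ((B + 2) * M)" by (simp only: of_nat_le_iff)
  then have "real n + 1 \<le> Bp * ?R" unfolding Bp_def by (simp add: algebra_simps)
  then have h5: "(real n + 1) / Bp \<le> ?R" using Bp by (simp add: divide_le_eq mult.commute)
  have phn: "\<phi> (M + 2) \<le> \<phi> n" using mono Mn by (simp add: monoD)
  have ph0: "0 < \<phi> (M + 2)" using phi1[of "M+2"] by simp
  have phn0: "0 < \<phi> n" using phi1[of n] by simp
  have h1: "?R powr (1/p) / ?R = ?R powr q * ?R"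
  proof -
    have "?R powr (1/p) = ?R powr (q + 1 + 1)" by (simp add: q_def)
    also have "\<dots> = ?R powr q * ?R * ?R" using Rpos by (simp add: powr_add power2_eq_square)
    finally show ?thesis using Rpos by simp
  qed
  have h3: "(?R + 2) * \<phi> (M + 2) \<le> (3 * ?R) * \<phi> n"
    using R1 phn ph0 by (intro mult_mono) auto
  have h4: "?R powr q * ?R / ((3 * ?R) * \<phi> n) \<le> ?R powr q * ?R / ((?R + 2) * \<phi> (M + 2))"
  proof (rule divide_left_mono[OF h3])
    show "0 \<le> ?R powr q * ?R" using Rpos by simp
    have "0 < (3 * ?R) * \<phi> n" using Rpos phn0 by simp
    moreover have "0 < (?R + 2) * \<phi> (M + 2)" using Rpos ph0 by simp
    ultimately show "0 < (3 * ?R) * \<phi> n * ((?R + 2) * \<phi> (M + 2))" by (rule mult_pos_pos)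
  qed
  have h4': "?R powr q * ?R / ((3 * ?R) * \<phi> n) = ?R powr q / (3 * \<phi> n)"
    using Rpos by simp
  have h6: "(real n + 1) powr q / Bp powr q \<le> ?R powr q"
    using powr_mono2[OF less_imp_le[OF q0] _ h5] Bp by (simp add: powr_divide)
  have h7: "(real n + 1) powr q / \<phi> n / K \<le> ?R powr q / (3 * \<phi> n)"
  proof -
    have "(real n + 1) powr q / \<phi> n / K = ((real n + 1) powr q / Bp powr q) / (3 * \<phi> n)"
      by (simp add: K_def field_simps)
    also have "\<dots> \<le> ?R powr q / (3 * \<phi> n)" using h6 phn0 by (intro divide_right_mono) auto
    finally show ?thesis .
  qed
  have "L \<le> L' / K" using K by (simp add: L'_def)
  also have "\<dots> < (real n + 1) powr q / \<phi> n / K" using divide_strict_right_mono[OF nL K] .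
  also have "\<dots> \<le> ?R powr q / (3 * \<phi> n)" by (rule h7)
  also have "\<dots> \<le> ?R powr (1/p) / ?R / ((?R + 2) * \<phi> (M + 2))" using h4 h4' h1 by simp
  finally show ?thesis unfolding M_def by auto
qed



lemma cmod_2_nat: "cmod (2 + complex_of_nat n) = real n + 2"
proof -
  have "2 + complex_of_nat n = of_nat (n + 2)" by simp
  then show ?thesis by (simp only: norm_of_nat)
qed

theorem theorem2:
  fixes m :: "nat \<Rightarrow> nat" and p :: real and \<phi> :: "nat \<Rightarrow> real"
  assumes "0 < p" and "p < 1/2"
    and "bounded_generating m"
    and "\<And>n. 1 \<le> \<phi> n" and "mono \<phi>"
    and "limsup (\<lambda>n. ereal ((real n + 1) powr (1/p - 2) / \<phi> n)) = \<infinity>"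
  shows "(SUP f \<in> {f. martingale m f \<and> Hp_norm m p f \<le> 1}.
            SUP n \<in> {1..}. weak_Lp_norm (Gm m) p (\<lambda>x. fejer_mean m f n x / of_real (\<phi> n))) = \<infinity>"
proof -
  have m2: "\<And>k. 2 \<le> m k" and bdd: "bdd_above (range m)"
    using assms(3) by (auto simp: bounded_generating_def)
  obtain B where B: "\<And>k. m k \<le> B" using bdd by (auto simp: bdd_above_def)
  have m0: "0 < m k'" for k' using m2[of k'] by simp
  have q: "0 < 1/p - 2" using assms(1,2) by (simp add: field_simps)
  let ?S = "{f. martingale m f \<and> Hp_norm m p f \<le> 1}"
  let ?T = "(SUP f \<in> ?S. SUP n \<in> {1..}. weak_Lp_norm (Gm m) p (\<lambda>x. fejer_mean m f n x / of_real (\<phi> n)))"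
  define C where "C k = real (Mk m k) powr (1/p) / real (Mk m k) / ((real (Mk m k) + 2) * \<phi> (Mk m k + 2))" for k
  have lower: "ennreal (C k / 2) \<le> ?T" for k
  proof -
    define a where "a = real (Mk m k) powr (1/p)"
    define M where "M = Mk m k"
    have Mpos: "0 < real M" using Mk_pos[of m k, OF m0] by (simp add: M_def)
    have a0: "0 < a" using Mpos by (simp add: a_def M_def)
    have ph: "0 < \<phi> (M + 2)" using assms(4)[of "M+2"] by simp
    have inS: "atom m k a \<in> ?S"
      using atom_martingale[of m, OF m2] Hp_atom[of m, OF m2 assms(1) a_def] by simp
    have Cpos: "0 < C k" using Mpos a0 ph by (simp add: C_def a_def[symmetric] M_def[symmetric])
    have cm: "cmod (fejer_mean m (atom m k a) (Mk m k + 2) x / of_real (\<phi> (Mk m k + 2))) = C k" for x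
    proof -
      have "cmod (fejer_mean m (atom m k a) (Mk m k + 2) x / of_real (\<phi> (Mk m k + 2)))
          = (a / real M) / (real M + 2) / \<phi> (M + 2)"
        using a0 Mpos ph unfolding fejer_atom[of m, OF m2]
        by (simp add: norm_divide norm_mult rademacher_def M_def cmod_2_nat)
      also have "\<dots> = C k" by (simp add: C_def a_def M_def)
      finally show ?thesis .
    qed
    have "ennreal (C k / 2) \<le> weak_Lp_norm (Gm m) p (\<lambda>x. fejer_mean m (atom m k a) (Mk m k + 2) x / of_real (\<phi> (Mk m k + 2)))"
      by (rule weak_const[OF prob_Gm[OF m0] assms(1) Cpos cm])
    also have "\<dots> \<le> (SUP n \<in> {1..}. weak_Lp_norm (Gm m) p (\<lambda>x. fejer_mean m (atom m k a) n x / of_real (\<phi> n)))"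
      by (rule SUP_upper) simp
    also have "\<dots> \<le> ?T"
      by (rule SUP_upper[OF inS])
    finally show ?thesis .
  qed
  show ?thesis
  proof (rule ccontr)
    assume ne: "?T \<noteq> \<infinity>"
    have "?T \<noteq> top" using ne by (simp only: infinity_ennreal_def not_False_eq_True)
    then have "?T < top" by (simp only: less_top)
    then obtain r where r: "?T = ennreal r" "0 \<le> r" by (auto simp: less_top_ennreal)
    obtain k where k: "2 * r < C k"
      using key[of m B p \<phi> "2 * r", OF m2 B assms(1) q assms(4) assms(5) assms(6)] unfolding C_def by blast
    have "ennreal r < ennreal (C k / 2)" using k r(2) by (subst ennreal_less_iff) auto
    also have "\<dots> \<le> ennreal r" using lower[of k] r(1) by simp
    finally show False by simp
  qed
qed

end
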